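(* Let $g:\Omega\to[0,1]$ be measurable with $\mathbb E[g]<1$, $g_{\omega,n}=\prod_{j=0}^{n-1}g(\theta^j\omega)$, and $\beta_1(r)=\|g-\mathbb E[g|\mathcal F_r]\|_{L^1(\Omega,\mathcal F,\mathbb P)}$. Suppose that $$\limsup_{k\to\infty}\psi_U(k)<\frac{1}{\mathbb E[g]}-1$$ and $\beta_1(r)\le Cr^{-A}$ for some $C>0$ and $A>1$. Then for every $\varepsilon\in(0,1)$ there is a constant $C_\varepsilon>0$ such that $\mathbb E[g_{\omega,n}]\le C_\varepsilon n^{1-\varepsilon A}$ for all $n\in\mathbb N$.
   Context: $(X_k)_{k\in\mathbb Z}$ is a stationary sequence with values in a measurable space $\Omega_0$ and $(\Omega,\mathcal F,\mathbb P,\theta)$ is its shift system ($\Omega=\Omega_0^{\mathbb Z}$, $\theta$ the left shift, $\mathbb P$ the law of the sequence). $\mathcal F_r$ is the $\sigma$-algebra generated by the coordinates $\omega_j$, $|j|\le r$. $\psi_U(m)$ is the smallest number such that $\mathbb P(A\cap B)-\mathbb P(A)\mathbb P(B)\le\mathbb P(A)\mathbb P(B)\psi_U(m)$ for all $k\in\mathbb N$, $A\in\sigma\{X_0,\dots,X_k\}$, $B\in\sigma\{X_{k+m},X_{k+m+1},\dots\}$. *)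

theory Defs
  imports "HOL-Probability.Probability"
begin

definition shift :: "(int \<Rightarrow> 'a) \<Rightarrow> (int \<Rightarrow> 'a)" where
  "shift \<omega> = (\<lambda>j. \<omega> (j + 1))"

definition coord_sets :: "(int \<Rightarrow> 'a) measure \<Rightarrow> 'a measure \<Rightarrow> int set \<Rightarrow> (int \<Rightarrow> 'a) set set" where
  "coord_sets P M0 J = sigma_sets (space P)
     (\<Union>j\<in>J. {{\<omega>\<in>space P. \<omega> j \<in> S} | S. S \<in> sets M0})"

definition Fr :: "(int \<Rightarrow> 'a) measure \<Rightarrow> 'a measure \<Rightarrow> nat \<Rightarrow> (int \<Rightarrow> 'a) measure" where
  "Fr P M0 r = sigma (space P) (\<Union>j\<in>{- int r..int r}. {{\<omega>\<in>space P. \<omega> j \<in> S} | S. S \<in> sets M0})"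

text \<open>psi_U(m): the smallest (extended real) constant c with
  P(A \<inter> B) - P(A)P(B) \<le> P(A)P(B) c for all k, A \<in> \<sigma>{X_0..X_k}, B \<in> \<sigma>{X_(k+m),...};
  infinity if no finite constant works.\<close>
definition psiU :: "(int \<Rightarrow> 'a) measure \<Rightarrow> 'a measure \<Rightarrow> nat \<Rightarrow> ereal" where
  "psiU P M0 m = Inf {c::ereal. \<forall>k::nat. \<forall>A \<in> coord_sets P M0 {0..int k}.
       \<forall>B \<in> coord_sets P M0 {int k + int m..}.
       ereal (measure P (A \<inter> B) - measure P A * measure P B)
         \<le> ereal (measure P A * measure P B) * c}"

definition beta1 :: "(int \<Rightarrow> 'a) measure \<Rightarrow> 'a measure \<Rightarrow> ((int \<Rightarrow> 'a) \<Rightarrow> real) \<Rightarrow> nat \<Rightarrow> real" where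
  "beta1 P M0 g r = (\<integral>\<omega>. \<bar>g \<omega> - real_cond_exp P (Fr P M0 r) g \<omega>\<bar> \<partial>P)"

definition gprod :: "((int \<Rightarrow> 'a) \<Rightarrow> real) \<Rightarrow> nat \<Rightarrow> (int \<Rightarrow> 'a) \<Rightarrow> real" where
  "gprod g n \<omega> = (\<Prod>j<n. g ((shift ^^ j) \<omega>))"

end

theory Submission
  imports Defs
begin


lemma mix_fun_set:
  fixes P F1 F2 :: "'b measure" and K :: ennreal
  assumes "prob_space P" and s1: "subalgebra P F1" and s2: "subalgebra P F2"
    and setmix: "\<And>A B. A \<in> sets F1 \<Longrightarrow> B \<in> sets F2 \<Longrightarrow> emeasure P (A \<inter> B) \<le> K * emeasure P A * emeasure P B"
    and A: "A \<in> sets F1" and hm: "h \<in> borel_measurable F2"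
  shows "(\<integral>\<^sup>+x. indicator A x * h x \<partial>P) \<le> K * emeasure P A * (\<integral>\<^sup>+x. h x \<partial>P)"
  using hm
proof (induction rule: borel_measurable_induct)
  case (cong f g)
  have sp: "space F2 = space P" using s2 by (simp add: subalgebra_def)
  have "(\<integral>\<^sup>+x. indicator A x * f x \<partial>P) = (\<integral>\<^sup>+x. indicator A x * g x \<partial>P)"
    by (rule nn_integral_cong) (use cong sp in auto)
  moreover have "(\<integral>\<^sup>+x. f x \<partial>P) = (\<integral>\<^sup>+x. g x \<partial>P)"
    by (rule nn_integral_cong) (use cong sp in auto)
  ultimately show ?case using cong by simp
next
  case (set B)
  have AP: "A \<in> sets P" using A s1 by (auto simp: subalgebra_def)
  have BP: "B \<in> sets P" using set s2 by (auto simp: subalgebra_def)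
  have "(\<integral>\<^sup>+x. indicator A x * indicator B x \<partial>P) = emeasure P (A \<inter> B)"
    using AP BP by (simp add: indicator_inter_arith[symmetric])
  also have "\<dots> \<le> K * emeasure P A * emeasure P B" using setmix A set by blast
  finally show ?case using BP by simp
next
  case (mult u c)
  have um: "u \<in> borel_measurable P" using mult s2 measurable_from_subalg by blast
  have AP: "A \<in> sets P" using A s1 by (auto simp: subalgebra_def)
  have "(\<integral>\<^sup>+x. indicator A x * (c * u x) \<partial>P) = c * (\<integral>\<^sup>+x. indicator A x * u x \<partial>P)"
    using um AP by (subst nn_integral_cmult[symmetric]) (auto simp: ac_simps)
  also have "\<dots> \<le> c * (K * emeasure P A * (\<integral>\<^sup>+x. u x \<partial>P))"
    by (rule mult_left_mono[OF mult.IH]) simp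
  also have "\<dots> = K * emeasure P A * (\<integral>\<^sup>+x. c * u x \<partial>P)"
    using um by (simp add: nn_integral_cmult ac_simps)
  finally show ?case .
next
  case (add u v)
  have um: "u \<in> borel_measurable P" "v \<in> borel_measurable P" using add s2 measurable_from_subalg by blast+
  have AP: "A \<in> sets P" using A s1 by (auto simp: subalgebra_def)
  have "(\<integral>\<^sup>+x. indicator A x * (v x + u x) \<partial>P) = (\<integral>\<^sup>+x. indicator A x * v x \<partial>P) + (\<integral>\<^sup>+x. indicator A x * u x \<partial>P)"
    using um AP by (subst nn_integral_add[symmetric]) (auto simp: distrib_left)
  also have "\<dots> \<le> K * emeasure P A * (\<integral>\<^sup>+x. v x \<partial>P) + K * emeasure P A * (\<integral>\<^sup>+x. u x \<partial>P)"
    by (rule add_mono[OF add.IH(2) add.IH(1)])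
  also have "\<dots> = K * emeasure P A * (\<integral>\<^sup>+x. v x + u x \<partial>P)"
    using um by (simp add: nn_integral_add distrib_left)
  finally show ?case .
next
  case (seq U)
  have um: "\<And>i. U i \<in> borel_measurable P" using seq s2 measurable_from_subalg by blast
  have AP: "A \<in> sets P" using A s1 by (auto simp: subalgebra_def)
  from seq have incU: "incseq U" by blast
  have inc2: "incseq (\<lambda>i x. indicator A x * U i x)"
    using incU by (auto simp: incseq_def le_fun_def intro!: mult_left_mono)
  have "(\<integral>\<^sup>+x. indicator A x * (SUP i. U i) x \<partial>P) = (\<integral>\<^sup>+x. (SUP i. indicator A x * U i x) \<partial>P)"
    by (simp only: SUP_apply SUP_mult_left_ennreal)
  also have "\<dots> = (SUP i. \<integral>\<^sup>+x. indicator A x * U i x \<partial>P)"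
    using inc2 um AP by (intro nn_integral_monotone_convergence_SUP) auto
  also have "\<dots> \<le> (SUP i. K * emeasure P A * (\<integral>\<^sup>+x. U i x \<partial>P))"
    using seq by (intro SUP_mono) blast
  also have "\<dots> = K * emeasure P A * (SUP i. (\<integral>\<^sup>+x. U i x \<partial>P))"
    by (simp add: SUP_mult_left_ennreal)
  also have "\<dots> = K * emeasure P A * (\<integral>\<^sup>+x. (SUP i. U i x) \<partial>P)"
    using incU um by (subst nn_integral_monotone_convergence_SUP) (auto simp: incseq_def le_fun_def)
  finally show ?case by (simp only: SUP_apply)
qed

lemma mix_fun:
  fixes P F1 F2 :: "'b measure" and K :: ennreal
  assumes pr: "prob_space P" and s1: "subalgebra P F1" and s2: "subalgebra P F2"
    and setmix: "\<And>A B. A \<in> sets F1 \<Longrightarrow> B \<in> sets F2 \<Longrightarrow> emeasure P (A \<inter> B) \<le> K * emeasure P A * emeasure P B"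
    and fm: "f \<in> borel_measurable F1" and hm: "h \<in> borel_measurable F2"
  shows "(\<integral>\<^sup>+x. f x * h x \<partial>P) \<le> K * (\<integral>\<^sup>+x. f x \<partial>P) * (\<integral>\<^sup>+x. h x \<partial>P)"
  using fm
proof (induction rule: borel_measurable_induct)
  case (cong f g)
  have sp: "space F1 = space P" using s1 by (simp add: subalgebra_def)
  have "(\<integral>\<^sup>+x. f x * h x \<partial>P) = (\<integral>\<^sup>+x. g x * h x \<partial>P)"
    by (rule nn_integral_cong) (use cong sp in auto)
  moreover have "(\<integral>\<^sup>+x. f x \<partial>P) = (\<integral>\<^sup>+x. g x \<partial>P)"
    by (rule nn_integral_cong) (use cong sp in auto)
  ultimately show ?case using cong by simp
next
  case (set B)
  have BP: "B \<in> sets P" using set s1 by (auto simp: subalgebra_def)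
  have "(\<integral>\<^sup>+x. indicator B x * h x \<partial>P) \<le> K * emeasure P B * (\<integral>\<^sup>+x. h x \<partial>P)"
    by (rule mix_fun_set[OF pr s1 s2 setmix set hm])
  moreover have "(\<integral>\<^sup>+x. indicator B x \<partial>P) = emeasure P B" using BP by simp
  ultimately show ?case by simp
next
  case (mult u c)
  have um: "u \<in> borel_measurable P" using mult s1 measurable_from_subalg by blast
  have hP: "h \<in> borel_measurable P" using hm s2 measurable_from_subalg by blast
  have "(\<integral>\<^sup>+x. (c * u x) * h x \<partial>P) = c * (\<integral>\<^sup>+x. u x * h x \<partial>P)"
    using um hP by (subst nn_integral_cmult[symmetric]) (auto simp: ac_simps)
  also have "\<dots> \<le> c * (K * (\<integral>\<^sup>+x. u x \<partial>P) * (\<integral>\<^sup>+x. h x \<partial>P))"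
    by (rule mult_left_mono[OF mult.IH]) simp
  also have "\<dots> = K * (\<integral>\<^sup>+x. c * u x \<partial>P) * (\<integral>\<^sup>+x. h x \<partial>P)"
    using um by (simp add: nn_integral_cmult ac_simps)
  finally show ?case .
next
  case (add u v)
  have um: "u \<in> borel_measurable P" "v \<in> borel_measurable P" using add s1 measurable_from_subalg by blast+
  have hP: "h \<in> borel_measurable P" using hm s2 measurable_from_subalg by blast
  have "(\<integral>\<^sup>+x. (v x + u x) * h x \<partial>P) = (\<integral>\<^sup>+x. v x * h x \<partial>P) + (\<integral>\<^sup>+x. u x * h x \<partial>P)"
    using um hP by (subst nn_integral_add[symmetric]) (auto simp: distrib_right)
  also have "\<dots> \<le> K * (\<integral>\<^sup>+x. v x \<partial>P) * (\<integral>\<^sup>+x. h x \<partial>P) + K * (\<integral>\<^sup>+x. u x \<partial>P) * (\<integral>\<^sup>+x. h x \<partial>P)"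
    by (rule add_mono[OF add.IH(2) add.IH(1)])
  also have "\<dots> = K * (\<integral>\<^sup>+x. v x + u x \<partial>P) * (\<integral>\<^sup>+x. h x \<partial>P)"
    using um by (simp add: nn_integral_add ring_distribs)
  finally show ?case .
next
  case (seq U)
  have um: "\<And>i. U i \<in> borel_measurable P" using seq s1 measurable_from_subalg by blast
  have hP: "h \<in> borel_measurable P" using hm s2 measurable_from_subalg by blast
  from seq have incU: "incseq U" by blast
  have inc2: "incseq (\<lambda>i x. U i x * h x)"
    using incU by (auto simp: incseq_def le_fun_def intro!: mult_right_mono)
  have "(\<integral>\<^sup>+x. (SUP i. U i) x * h x \<partial>P) = (\<integral>\<^sup>+x. (SUP i. U i x * h x) \<partial>P)"
    by (simp only: SUP_apply SUP_mult_right_ennreal)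
  also have "\<dots> = (SUP i. \<integral>\<^sup>+x. U i x * h x \<partial>P)"
    using inc2 um hP by (intro nn_integral_monotone_convergence_SUP) auto
  also have "\<dots> \<le> (SUP i. K * (\<integral>\<^sup>+x. U i x \<partial>P) * (\<integral>\<^sup>+x. h x \<partial>P))"
    using seq by (intro SUP_mono) blast
  also have "\<dots> = K * (SUP i. (\<integral>\<^sup>+x. U i x \<partial>P)) * (\<integral>\<^sup>+x. h x \<partial>P)"
    by (simp only: SUP_mult_left_ennreal SUP_mult_right_ennreal)
  also have "\<dots> = K * (\<integral>\<^sup>+x. (SUP i. U i x) \<partial>P) * (\<integral>\<^sup>+x. h x \<partial>P)"
    using incU um by (subst nn_integral_monotone_convergence_SUP) (auto simp: incseq_def le_fun_def)
  finally show ?case by (simp only: SUP_apply)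
qed



definition GJ :: "(int \<Rightarrow> 'a) measure \<Rightarrow> 'a measure \<Rightarrow> int set \<Rightarrow> (int \<Rightarrow> 'a) set set" where
  "GJ P M0 J = (\<Union>j\<in>J. {{\<omega>\<in>space P. \<omega> j \<in> S} | S. S \<in> sets M0})"

definition SA :: "(int \<Rightarrow> 'a) measure \<Rightarrow> 'a measure \<Rightarrow> int set \<Rightarrow> (int \<Rightarrow> 'a) measure" where
  "SA P M0 J = sigma (space P) (GJ P M0 J)"

lemma space_P:
  assumes sets_P: "sets P = sets (Pi\<^sub>M UNIV (\<lambda>_::int. M0))"
  shows "space P = {\<omega>. \<forall>j. \<omega> j \<in> space M0}"
  using sets_eq_imp_space_eq[OF sets_P] by (auto simp: space_PiM)

lemma coord_meas:
  assumes sets_P: "sets P = sets (Pi\<^sub>M UNIV (\<lambda>_::int. M0))"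
  shows "(\<lambda>\<omega>. \<omega> j) \<in> measurable P M0"
  using measurable_component_singleton[of j UNIV "\<lambda>_. M0"]
  by (simp add: measurable_cong_sets[OF sets_P refl])

lemma GJ_sub:
  assumes sets_P: "sets P = sets (Pi\<^sub>M UNIV (\<lambda>_::int. M0))"
  shows "GJ P M0 J \<subseteq> sets P"
proof
  fix X assume "X \<in> GJ P M0 J"
  then obtain j S where "S \<in> sets M0" "X = {\<omega>\<in>space P. \<omega> j \<in> S}" by (auto simp: GJ_def)
  then show "X \<in> sets P" using measurable_sets[OF coord_meas[OF sets_P], of S j]
    by (simp add: vimage_def Int_def conj_commute)
qed

lemma GJ_pow: "GJ P M0 J \<subseteq> Pow (space P)"
  by (auto simp: GJ_def)

lemma sets_SA: "sets (SA P M0 J) = coord_sets P M0 J"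
  by (simp add: SA_def coord_sets_def GJ_def[symmetric] sets_measure_of[OF GJ_pow])

lemma space_SA: "space (SA P M0 J) = space P"
  by (simp add: SA_def space_measure_of[OF GJ_pow])

lemma subalg_SA:
  assumes sets_P: "sets P = sets (Pi\<^sub>M UNIV (\<lambda>_::int. M0))"
  shows "subalgebra P (SA P M0 J)"
  unfolding subalgebra_def space_SA
  using sigma_sets_le_sets_iff[of P "GJ P M0 J"] GJ_sub[OF sets_P]
  by (simp add: SA_def sets_measure_of[OF GJ_pow])

lemma SA_mono:
  assumes "J \<subseteq> J'"
  shows "subalgebra (SA P M0 J') (SA P M0 J)"
proof -
  have "GJ P M0 J \<subseteq> GJ P M0 J'" using assms by (auto simp: GJ_def)
  then show ?thesis
    by (simp add: subalgebra_def SA_def sets_measure_of[OF GJ_pow] space_measure_of[OF GJ_pow] sigma_sets_subseteq)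
qed

lemma Fr_SA: "Fr P M0 r = SA P M0 {- int r..int r}"
  by (simp add: Fr_def SA_def GJ_def)

lemma shift_pow_apply: "(shift ^^ s) \<omega> j = \<omega> (j + int s)"
  by (induction s arbitrary: j) (auto simp: shift_def ac_simps)

lemma shift_pow_space:
  assumes sets_P: "sets P = sets (Pi\<^sub>M UNIV (\<lambda>_::int. M0))"
  shows "\<omega> \<in> space P \<Longrightarrow> (shift ^^ s) \<omega> \<in> space P"
  by (simp add: space_P[OF sets_P] shift_pow_apply)

lemma shift_pow_SA:
  assumes sets_P: "sets P = sets (Pi\<^sub>M UNIV (\<lambda>_::int. M0))"
  shows "shift ^^ s \<in> measurable (SA P M0 ((\<lambda>j. j + int s) ` J)) (SA P M0 J)"
  unfolding SA_def[of P M0 J]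
proof (rule measurable_measure_of[OF GJ_pow])
  show "shift ^^ s \<in> space (SA P M0 ((\<lambda>j. j + int s) ` J)) \<rightarrow> space P"
    using shift_pow_space[OF sets_P] by (auto simp: space_SA)
  fix Y assume "Y \<in> GJ P M0 J"
  then obtain j S where jS: "j \<in> J" "S \<in> sets M0" "Y = {\<omega>\<in>space P. \<omega> j \<in> S}" by (auto simp: GJ_def)
  have "(shift ^^ s) -` Y \<inter> space (SA P M0 ((\<lambda>j. j + int s) ` J)) = {\<omega>\<in>space P. \<omega> (j + int s) \<in> S}"
    using jS shift_pow_space[OF sets_P] by (auto simp: space_SA shift_pow_apply)
  also have "\<dots> \<in> GJ P M0 ((\<lambda>j. j + int s) ` J)"
    using jS by (auto simp: GJ_def)
  also have "\<dots> \<subseteq> sets (SA P M0 ((\<lambda>j. j + int s) ` J))"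
    by (simp add: SA_def sets_measure_of[OF GJ_pow] sigma_sets.Basic subsetI)
  finally show "(shift ^^ s) -` Y \<inter> space (SA P M0 ((\<lambda>j. j + int s) ` J)) \<in> sets (SA P M0 ((\<lambda>j. j + int s) ` J))" .
qed

lemma shift_meas:
  assumes sets_P: "sets P = sets (Pi\<^sub>M UNIV (\<lambda>_::int. M0))"
  shows "shift \<in> measurable P P"
proof -
  have "(\<lambda>\<omega> i. \<omega> (i + 1)) \<in> measurable P (Pi\<^sub>M UNIV (\<lambda>_::int. M0))"
    by (rule measurable_PiM_single') (auto simp: coord_meas[OF sets_P] space_P[OF sets_P])
  then show ?thesis
    by (simp add: shift_def[abs_def] measurable_cong_sets[OF refl sets_P])
qed

lemma shift_pow_meas:
  assumes sets_P: "sets P = sets (Pi\<^sub>M UNIV (\<lambda>_::int. M0))"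
  shows "shift ^^ s \<in> measurable P P"
  by (induction s) (auto intro: measurable_compose[OF _ shift_meas[OF sets_P]])

lemma integral_shift_pow:
  assumes sets_P: "sets P = sets (Pi\<^sub>M UNIV (\<lambda>_::int. M0))"
    and stationary: "distr P P shift = P"
    and f: "f \<in> borel_measurable P"
  shows "(\<integral>\<omega>. f ((shift ^^ s) \<omega>) \<partial>P) = (\<integral>\<omega>. (f \<omega>::real) \<partial>P)"
proof (induction s)
  case 0 then show ?case by simp
next
  case (Suc s)
  have m: "(\<lambda>\<omega>. f ((shift ^^ s) \<omega>)) \<in> borel_measurable P"
    using f shift_pow_meas[OF sets_P] by measurable
  have "(\<integral>\<omega>. f ((shift ^^ Suc s) \<omega>) \<partial>P) = (\<integral>\<omega>. f ((shift ^^ s) (shift \<omega>)) \<partial>P)"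
    by (simp only: funpow_Suc_right o_def)
  also have "\<dots> = (\<integral>\<omega>. f ((shift ^^ s) \<omega>) \<partial>distr P P shift)"
    by (rule integral_distr[symmetric, OF shift_meas[OF sets_P] m])
  also have "\<dots> = (\<integral>\<omega>. f ((shift ^^ s) \<omega>) \<partial>P)" using stationary by simp
  finally show ?case using Suc by simp
qed



lemma psi_choice:
  fixes \<psi> :: "nat \<Rightarrow> ereal" and \<mu> :: real
  assumes "0 \<le> \<mu>" "\<mu> < 1" and lim: "limsup \<psi> < 1 / ereal \<mu> - 1"
  shows "\<exists>c>0. (1 + c) * \<mu> < 1 \<and> (\<exists>m0. \<forall>m\<ge>m0. \<psi> m < ereal c)"
proof -
  define X where "X = 1 / ereal \<mu> - 1"
  have X0: "0 < X"
  proof (cases "\<mu> = 0")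
    case True then show ?thesis by (simp add: X_def divide_ereal_def)
  next
    case False
    then have "X = ereal (1 / \<mu> - 1)" using assms by (simp add: X_def divide_ereal_def one_ereal_def inverse_eq_divide)
    moreover have "1 < 1 / \<mu>" using assms False by (simp add: field_simps)
    ultimately show ?thesis by simp
  qed
  have "max (limsup \<psi>) 0 < X" using X0 lim by (simp add: X_def)
  then obtain c where c1: "max (limsup \<psi>) 0 < ereal c" and c2: "ereal c < X"
    using ereal_dense2 by blast
  have cpos: "c > 0" using c1 by simp
  have cmu: "(1 + c) * \<mu> < 1"
  proof (cases "\<mu> = 0")
    case True then show ?thesis by simp
  next
    case False
    then have "X = ereal (1 / \<mu> - 1)" using assms by (simp add: X_def divide_ereal_def one_ereal_def inverse_eq_divide)
    then have "c < 1 / \<mu> - 1" using c2 by simp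
    then show ?thesis using assms False by (simp add: field_simps)
  qed
  have "limsup \<psi> < ereal c" using c1 by simp
  then have "eventually (\<lambda>m. \<psi> m < ereal c) sequentially" by (rule Limsup_lessD)
  then obtain m0 where "\<forall>m\<ge>m0. \<psi> m < ereal c" by (auto simp: eventually_sequentially)
  then show ?thesis using cpos cmu by blast
qed

lemma set_mix:
  assumes prob: "prob_space P" and sets_P: "sets P = sets (Pi\<^sub>M UNIV (\<lambda>_::int. M0))"
    and psim: "psiU P M0 m < ereal c" and c0: "0 \<le> c"
    and A: "A \<in> sets (SA P M0 {0..int k})" and B: "B \<in> sets (SA P M0 {int k + int m..})"
  shows "emeasure P (A \<inter> B) \<le> ennreal (1 + c) * emeasure P A * emeasure P B"
proof -
  interpret prob_space P by (rule prob)
  obtain c' where c'S: "\<forall>k::nat. \<forall>A \<in> coord_sets P M0 {0..int k}.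
       \<forall>B \<in> coord_sets P M0 {int k + int m..}.
       ereal (measure P (A \<inter> B) - measure P A * measure P B)
         \<le> ereal (measure P A * measure P B) * c'" and c'c: "c' < ereal c"
    using psim unfolding psiU_def Inf_less_iff by blast
  have AS: "A \<in> coord_sets P M0 {0..int k}" using A by (simp add: sets_SA)
  have BS: "B \<in> coord_sets P M0 {int k + int m..}" using B by (simp add: sets_SA)
  have "ereal (measure P (A \<inter> B) - measure P A * measure P B) \<le> ereal (measure P A * measure P B) * c'"
    using c'S AS BS by blast
  also have "\<dots> \<le> ereal (measure P A * measure P B) * ereal c"
    using c'c by (intro ereal_mult_left_mono) auto
  finally have "measure P (A \<inter> B) - measure P A * measure P B \<le> measure P A * measure P B * c"
    by simp
  then have le: "measure P (A \<inter> B) \<le> (1 + c) * measure P A * measure P B"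
    by (simp add: algebra_simps)
  have AP: "A \<in> sets P" using A subalg_SA[OF sets_P] by (auto simp: subalgebra_def)
  have BP: "B \<in> sets P" using B subalg_SA[OF sets_P] by (auto simp: subalgebra_def)
  have "emeasure P (A \<inter> B) = ennreal (measure P (A \<inter> B))" by (simp add: emeasure_eq_measure)
  also have "\<dots> \<le> ennreal ((1 + c) * measure P A * measure P B)" using le by (rule ennreal_leI)
  also have "\<dots> = ennreal (1 + c) * emeasure P A * emeasure P B"
    using c0 by (simp add: emeasure_eq_measure ennreal_mult)
  finally show ?thesis .
qed

lemma fun_mix:
  assumes prob: "prob_space P" and sets_P: "sets P = sets (Pi\<^sub>M UNIV (\<lambda>_::int. M0))"
    and psim: "psiU P M0 m < ereal c" and c0: "0 \<le> c"
    and fm: "f \<in> borel_measurable (SA P M0 {0..int k})" and hm: "h \<in> borel_measurable (SA P M0 {int k + int m..})"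
    and fb: "\<And>\<omega>. \<omega> \<in> space P \<Longrightarrow> 0 \<le> f \<omega> \<and> f \<omega> \<le> 1"
    and hb: "\<And>\<omega>. \<omega> \<in> space P \<Longrightarrow> 0 \<le> h \<omega> \<and> h \<omega> \<le> 1"
  shows "(\<integral>\<omega>. f \<omega> * h \<omega> \<partial>P) \<le> (1 + c) * (\<integral>\<omega>. f \<omega> \<partial>P) * (\<integral>\<omega>. h \<omega> \<partial>P)"
proof -
  interpret prob_space P by (rule prob)
  have s1: "subalgebra P (SA P M0 {0..int k})" and s2: "subalgebra P (SA P M0 {int k + int m..})"
    by (rule subalg_SA[OF sets_P])+
  have fP: "f \<in> borel_measurable P" using fm s1 measurable_from_subalg by blast
  have hP: "h \<in> borel_measurable P" using hm s2 measurable_from_subalg by blast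
  have fi: "integrable P f" using fb fP by (intro integrable_const_bound[where B=1]) auto
  have hi: "integrable P h" using hb hP by (intro integrable_const_bound[where B=1]) auto
  have fhi: "integrable P (\<lambda>\<omega>. f \<omega> * h \<omega>)" using fb hb fP hP
    by (intro integrable_const_bound[where B=1]) (auto simp: abs_mult intro: mult_le_one)
  have "(\<integral>\<^sup>+x. ennreal (f x) * ennreal (h x) \<partial>P) \<le> ennreal (1 + c) * (\<integral>\<^sup>+x. ennreal (f x) \<partial>P) * (\<integral>\<^sup>+x. ennreal (h x) \<partial>P)"
  proof (rule mix_fun[OF prob s1 s2])
    show "\<And>A B. A \<in> sets (SA P M0 {0..int k}) \<Longrightarrow> B \<in> sets (SA P M0 {int k + int m..}) \<Longrightarrow>
        emeasure P (A \<inter> B) \<le> ennreal (1 + c) * emeasure P A * emeasure P B"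
      by (rule set_mix[OF prob sets_P psim c0])
  qed (use fm hm in auto)
  moreover have "(\<integral>\<^sup>+x. ennreal (f x) * ennreal (h x) \<partial>P) = ennreal (\<integral>\<omega>. f \<omega> * h \<omega> \<partial>P)"
    using fb hb fhi by (subst nn_integral_eq_integral[symmetric]) (auto simp: ennreal_mult intro!: nn_integral_cong)
  moreover have "(\<integral>\<^sup>+x. ennreal (f x) \<partial>P) = ennreal (\<integral>\<omega>. f \<omega> \<partial>P)"
    using fb fi by (intro nn_integral_eq_integral) auto
  moreover have "(\<integral>\<^sup>+x. ennreal (h x) \<partial>P) = ennreal (\<integral>\<omega>. h \<omega> \<partial>P)"
    using hb hi by (intro nn_integral_eq_integral) auto
  moreover have "0 \<le> (\<integral>\<omega>. f \<omega> \<partial>P)" "0 \<le> (\<integral>\<omega>. h \<omega> \<partial>P)"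
    using fb hb by (auto intro!: integral_nonneg_AE)
  ultimately have "ennreal (\<integral>\<omega>. f \<omega> * h \<omega> \<partial>P) \<le> ennreal ((1 + c) * (\<integral>\<omega>. f \<omega> \<partial>P) * (\<integral>\<omega>. h \<omega> \<partial>P))"
    using c0 by (simp add: ennreal_mult)
  then show ?thesis using c0 \<open>0 \<le> (\<integral>\<omega>. f \<omega> \<partial>P)\<close> \<open>0 \<le> (\<integral>\<omega>. h \<omega> \<partial>P)\<close>
    by (subst (asm) ennreal_le_iff) auto
qed

lemma prod_tele:
  fixes a b :: "nat \<Rightarrow> real"
  assumes "\<And>i. i < K \<Longrightarrow> 0 \<le> a i \<and> a i \<le> 1 \<and> 0 \<le> b i \<and> b i \<le> 1"
  shows "(\<Prod>i<K. a i) \<le> (\<Prod>i<K. b i) + (\<Sum>i<K. \<bar>a i - b i\<bar>)"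
  using assms
proof (induction K)
  case 0 then show ?case by simp
next
  case (Suc K)
  define Pa where "Pa = (\<Prod>i<K. a i)"
  define Pb where "Pb = (\<Prod>i<K. b i)"
  define S where "S = (\<Sum>i<K. \<bar>a i - b i\<bar>)"
  have IH: "Pa \<le> Pb + S" using Suc by (simp add: Pa_def Pb_def S_def)
  have Pb01: "0 \<le> Pb" "Pb \<le> 1" using Suc.prems unfolding Pb_def
    by (auto intro!: prod_nonneg prod_le_1)
  have ab: "0 \<le> a K" "a K \<le> 1" "0 \<le> b K" "b K \<le> 1" using Suc.prems by auto
  have S0: "0 \<le> S" by (simp add: S_def sum_nonneg)
  have "Pa * a K \<le> (Pb + S) * a K" using IH ab by (intro mult_right_mono) auto
  also have "\<dots> \<le> Pb * a K + S" using S0 ab by (simp add: distrib_right mult_left_le)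
  also have "Pb * a K \<le> Pb * b K + \<bar>a K - b K\<bar>"
  proof -
    have "Pb * a K - Pb * b K = Pb * (a K - b K)" by (simp add: algebra_simps)
    also have "\<dots> \<le> Pb * \<bar>a K - b K\<bar>" using Pb01 by (intro mult_left_mono) auto
    also have "\<dots> \<le> \<bar>a K - b K\<bar>" using Pb01 by (simp add: mult_left_le_one_le)
    finally show ?thesis by simp
  qed
  finally have "Pa * a K \<le> Pb * b K + (S + \<bar>a K - b K\<bar>)" by simp
  then show ?case by (simp add: Pa_def Pb_def S_def)
qed

lemma prod_subset_le:
  fixes f :: "nat \<Rightarrow> real"
  assumes "finite T" "S \<subseteq> T" "\<And>j. j \<in> T \<Longrightarrow> 0 \<le> f j \<and> f j \<le> 1"
  shows "prod f T \<le> prod f S"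
proof -
  have "prod f T = prod f (T - S) * prod f S"
    using assms by (simp add: prod.subset_diff)
  also have "\<dots> \<le> 1 * prod f S"
    using assms by (intro mult_right_mono prod_le_1 prod_nonneg) (auto intro!: prod_nonneg)
  finally show ?thesis by simp
qed

lemma image_shift_interval:
  "(\<lambda>j. j + int s) ` {- int r..int r} = {int s - int r..int s + int r}"
proof (rule set_eqI, rule iffI)
  fix x assume "x \<in> {int s - int r..int s + int r}"
  then show "x \<in> (\<lambda>j. j + int s) ` {- int r..int r}"
    by (intro image_eqI[of _ _ "x - int s"]) auto
qed auto



lemma cond_exp_clip:
  fixes r :: nat
  assumes prob: "prob_space P" and sets_P: "sets P = sets (Pi\<^sub>M UNIV (\<lambda>_::int. M0))"
    and g_meas: "g \<in> borel_measurable P"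
    and g_range: "\<And>\<omega>. \<omega> \<in> space P \<Longrightarrow> 0 \<le> g \<omega> \<and> g \<omega> \<le> 1"
  defines "h' \<equiv> (\<lambda>\<omega>. max 0 (min 1 (real_cond_exp P (Fr P M0 r) g \<omega>)))"
  shows "h' \<in> borel_measurable (SA P M0 {- int r..int r})"
    and "\<And>\<omega>. 0 \<le> h' \<omega> \<and> h' \<omega> \<le> 1"
    and "(\<integral>\<omega>. h' \<omega> \<partial>P) = (\<integral>\<omega>. g \<omega> \<partial>P)"
    and "(\<integral>\<omega>. \<bar>g \<omega> - h' \<omega>\<bar> \<partial>P) \<le> beta1 P M0 g r"
proof -
  interpret prob_space P by (rule prob)
  have sub: "subalgebra P (Fr P M0 r)" using subalg_SA[OF sets_P] by (simp add: Fr_SA)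
  have "finite_measure_subalgebra P (Fr P M0 r)"
    by (rule finite_measure_subalgebra.intro[OF finite_measure_axioms]) (rule finite_measure_subalgebra_axioms.intro[OF sub])
  then interpret S: sigma_finite_subalgebra P "Fr P M0 r"
    by (rule finite_measure_subalgebra_is_sigma_finite)
  define h0 where "h0 = real_cond_exp P (Fr P M0 r) g"
  have gi: "integrable P g" using g_range g_meas by (intro integrable_const_bound[where B=1]) auto
  have h0m: "h0 \<in> borel_measurable (Fr P M0 r)" "h0 \<in> borel_measurable P"
    unfolding h0_def by auto
  have h0i: "integrable P h0" unfolding h0_def by (rule S.real_cond_exp_int(1)[OF gi])
  have ae0: "AE \<omega> in P. 0 \<le> h0 \<omega>" unfolding h0_def
    by (rule S.real_cond_exp_ge_c[OF gi]) (use g_range in auto)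
  have ae1: "AE \<omega> in P. h0 \<omega> \<le> 1" unfolding h0_def
    by (rule S.real_cond_exp_le_c[OF gi]) (use g_range in auto)
  have hh: "h' = (\<lambda>\<omega>. max 0 (min 1 (h0 \<omega>)))" by (simp add: h'_def h0_def)
  show "h' \<in> borel_measurable (SA P M0 {- int r..int r})"
    using h0m(1) unfolding hh Fr_SA by measurable
  show "\<And>\<omega>. 0 \<le> h' \<omega> \<and> h' \<omega> \<le> 1" unfolding hh by auto
  have h'P: "h' \<in> borel_measurable P" using h0m(2) unfolding hh by measurable
  have "(\<integral>\<omega>. h' \<omega> \<partial>P) = (\<integral>\<omega>. h0 \<omega> \<partial>P)"
    using ae0 ae1 h'P h0m(2) by (intro integral_cong_AE) (auto simp: hh)
  also have "\<dots> = (\<integral>\<omega>. g \<omega> \<partial>P)" unfolding h0_def by (rule S.real_cond_exp_int(2)[OF gi])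
  finally show "(\<integral>\<omega>. h' \<omega> \<partial>P) = (\<integral>\<omega>. g \<omega> \<partial>P)" .
  have pw: "\<bar>g \<omega> - h' \<omega>\<bar> \<le> \<bar>g \<omega> - h0 \<omega>\<bar>" if "\<omega> \<in> space P" for \<omega>
    using g_range[OF that] unfolding hh by (auto simp: max_def min_def abs_if)
  have "(\<integral>\<omega>. \<bar>g \<omega> - h' \<omega>\<bar> \<partial>P) \<le> (\<integral>\<omega>. \<bar>g \<omega> - h0 \<omega>\<bar> \<partial>P)"
  proof (rule integral_mono)
    show "integrable P (\<lambda>\<omega>. \<bar>g \<omega> - h0 \<omega>\<bar>)" using gi h0i by auto
    have h'i: "integrable P h'" using h'P by (intro integrable_const_bound[where B=1]) (auto simp: hh)
    show "integrable P (\<lambda>\<omega>. \<bar>g \<omega> - h' \<omega>\<bar>)" using gi h'i by auto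
  qed (use pw in auto)
  also have "\<dots> = beta1 P M0 g r" by (simp add: beta1_def h0_def)
  finally show "(\<integral>\<omega>. \<bar>g \<omega> - h' \<omega>\<bar> \<partial>P) \<le> beta1 P M0 g r" .
qed



lemma fac_meas:
  fixes r s :: nat
  assumes sets_P: "sets P = sets (Pi\<^sub>M UNIV (\<lambda>_::int. M0))"
    and h'm: "h' \<in> borel_measurable (SA P M0 {- int r..int r})"
    and J: "{int s - int r..int s + int r} \<subseteq> J"
  shows "(\<lambda>\<omega>. h' ((shift ^^ s) \<omega>)) \<in> borel_measurable (SA P M0 J)"
proof -
  have "(\<lambda>\<omega>. h' ((shift ^^ s) \<omega>)) \<in> borel_measurable (SA P M0 ((\<lambda>j. j + int s) ` {- int r..int r}))"
    by (rule measurable_compose[OF shift_pow_SA[OF sets_P] h'm])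
  then have "(\<lambda>\<omega>. h' ((shift ^^ s) \<omega>)) \<in> borel_measurable (SA P M0 {int s - int r..int s + int r})"
    by (simp only: image_shift_interval)
  then show ?thesis by (rule measurable_from_subalg[OF SA_mono[OF J]])
qed

lemma prod_bound:
  fixes r m :: nat and c \<mu> :: real
  assumes prob: "prob_space P" and sets_P: "sets P = sets (Pi\<^sub>M UNIV (\<lambda>_::int. M0))"
    and stationary: "distr P P shift = P"
    and h'm: "h' \<in> borel_measurable (SA P M0 {- int r..int r})"
    and h'b: "\<And>\<omega>. 0 \<le> h' \<omega> \<and> h' \<omega> \<le> 1"
    and h'int: "(\<integral>\<omega>. h' \<omega> \<partial>P) = \<mu>"
    and psim: "psiU P M0 m < ereal c" and c0: "0 \<le> c"
  shows "(\<integral>\<omega>. (\<Prod>i<Suc K. h' ((shift ^^ (i * (2 * r + m) + r)) \<omega>)) \<partial>P) \<le> ((1 + c) * \<mu>) ^ Suc K"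
proof (induction K)
  define L where "L = 2 * r + m"
  have h'P: "h' \<in> borel_measurable P" using h'm subalg_SA[OF sets_P] measurable_from_subalg by blast
  have mu0: "0 \<le> \<mu>" using h'b h'int[symmetric] by (simp add: integral_nonneg)
  have fint: "(\<integral>\<omega>. h' ((shift ^^ s) \<omega>) \<partial>P) = \<mu>" for s
    using integral_shift_pow[OF sets_P stationary h'P] h'int by simp
  case 0
  have "(\<integral>\<omega>. (\<Prod>i<Suc 0. h' ((shift ^^ (i * (2 * r + m) + r)) \<omega>)) \<partial>P) = \<mu>"
    using fint by simp
  also have "\<dots> \<le> ((1 + c) * \<mu>) ^ Suc 0" using mu0 c0 by (simp add: distrib_right)
  finally show ?case .
next
  case (Suc K)
  define L where "L = 2 * r + m"
  have h'P: "h' \<in> borel_measurable P" using h'm subalg_SA[OF sets_P] measurable_from_subalg by blast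
  have mu0: "0 \<le> \<mu>" using h'b h'int[symmetric] by (simp add: integral_nonneg)
  have fint: "(\<integral>\<omega>. h' ((shift ^^ s) \<omega>) \<partial>P) = \<mu>" for s
    using integral_shift_pow[OF sets_P stationary h'P] h'int by simp
  define k where "k = K * L + 2 * r"
  define \<Phi> where "\<Phi> = (\<lambda>\<omega>. (\<Prod>i<Suc K. h' ((shift ^^ (i * L + r)) \<omega>)))"
  define s where "s = Suc K * L + r"
  have \<Phi>m: "\<Phi> \<in> borel_measurable (SA P M0 {0..int k})"
    unfolding \<Phi>_def
  proof (rule borel_measurable_prod)
    fix i assume "i \<in> {..<Suc K}"
    then have "i \<le> K" by simp
    then have "int i * int L \<le> int K * int L" by (simp add: mult_right_mono)
    then show "(\<lambda>\<omega>. h' ((shift ^^ (i * L + r)) \<omega>)) \<in> borel_measurable (SA P M0 {0..int k})"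
      by (intro fac_meas[OF sets_P h'm]) (auto simp: k_def)
  qed
  have fm: "(\<lambda>\<omega>. h' ((shift ^^ s) \<omega>)) \<in> borel_measurable (SA P M0 {int k + int m..})"
    by (intro fac_meas[OF sets_P h'm]) (auto simp: k_def s_def L_def)
  have \<Phi>b: "0 \<le> \<Phi> \<omega> \<and> \<Phi> \<omega> \<le> 1" for \<omega>
    unfolding \<Phi>_def by (intro conjI prod_nonneg prod_le_1) (use h'b in blast)+
  have "(\<integral>\<omega>. (\<Prod>i<Suc (Suc K). h' ((shift ^^ (i * L + r)) \<omega>)) \<partial>P)
      = (\<integral>\<omega>. \<Phi> \<omega> * h' ((shift ^^ s) \<omega>) \<partial>P)"
    by (simp add: \<Phi>_def s_def)
  also have "\<dots> \<le> (1 + c) * (\<integral>\<omega>. \<Phi> \<omega> \<partial>P) * (\<integral>\<omega>. h' ((shift ^^ s) \<omega>) \<partial>P)"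
    by (rule fun_mix[OF prob sets_P psim c0 \<Phi>m fm]) (use \<Phi>b h'b in auto)
  also have "\<dots> \<le> (1 + c) * ((1 + c) * \<mu>) ^ Suc K * \<mu>"
    using Suc.IH c0 mu0 by (simp add: fint \<Phi>_def L_def mult_right_mono)
  also have "\<dots> = ((1 + c) * \<mu>) ^ Suc (Suc K)" by (simp add: algebra_simps)
  finally show ?case by (simp add: L_def)
qed



lemma prod_abs_le1:
  fixes f :: "'i \<Rightarrow> real"
  assumes "\<And>i. i \<in> S \<Longrightarrow> 0 \<le> f i \<and> f i \<le> 1"
  shows "\<bar>prod f S\<bar> \<le> 1"
proof -
  have "0 \<le> prod f S" "prod f S \<le> 1" using assms by (auto intro!: prod_nonneg prod_le_1)
  then show ?thesis by simp
qed

lemma main_bound: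
  fixes r m n :: nat and c :: real
  assumes prob: "prob_space P" and sets_P: "sets P = sets (Pi\<^sub>M UNIV (\<lambda>_::int. M0))"
    and stationary: "distr P P shift = P"
    and g_meas: "g \<in> borel_measurable P"
    and g_range: "\<And>\<omega>. \<omega> \<in> space P \<Longrightarrow> 0 \<le> g \<omega> \<and> g \<omega> \<le> 1"
    and psim: "psiU P M0 m < ereal c" and c0: "0 \<le> c" and m1: "1 \<le> m" and n1: "1 \<le> n"
  shows "(\<integral>\<omega>. gprod g n \<omega> \<partial>P) \<le> ((1 + c) * (\<integral>\<omega>. g \<omega> \<partial>P)) ^ Suc ((n - 1) div (2 * r + m))
          + real (Suc ((n - 1) div (2 * r + m))) * beta1 P M0 g r"
proof -
  interpret prob_space P by (rule prob)
  define L where "L = 2 * r + m"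
  define K where "K = Suc ((n - 1) div L)"
  define \<mu> where "\<mu> = (\<integral>\<omega>. g \<omega> \<partial>P)"
  define h' where "h' = (\<lambda>\<omega>. max 0 (min 1 (real_cond_exp P (Fr P M0 r) g \<omega>)))"
  have clip1: "h' \<in> borel_measurable (SA P M0 {- int r..int r})"
    using cond_exp_clip(1)[OF prob sets_P g_meas, of r] g_range unfolding h'_def by blast
  have clip3: "(\<integral>\<omega>. h' \<omega> \<partial>P) = \<mu>"
    using cond_exp_clip(3)[OF prob sets_P g_meas, of r] g_range unfolding h'_def \<mu>_def by blast
  have clip4: "(\<integral>\<omega>. \<bar>g \<omega> - h' \<omega>\<bar> \<partial>P) \<le> beta1 P M0 g r"
    using cond_exp_clip(4)[OF prob sets_P g_meas, of r] g_range unfolding h'_def by blast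
  have L1: "L \<ge> 1" using m1 by (simp add: L_def)
  have gs: "(\<lambda>\<omega>. g ((shift ^^ s) \<omega>)) \<in> borel_measurable P" for s
    by (rule measurable_compose[OF shift_pow_meas[OF sets_P] g_meas])
  have h'P: "h' \<in> borel_measurable P" using clip1 subalg_SA[OF sets_P] measurable_from_subalg by blast
  have hs: "(\<lambda>\<omega>. h' ((shift ^^ s) \<omega>)) \<in> borel_measurable P" for s
    by (rule measurable_compose[OF shift_pow_meas[OF sets_P] h'P])
  have gsb: "0 \<le> g ((shift ^^ s) \<omega>) \<and> g ((shift ^^ s) \<omega>) \<le> 1" if "\<omega> \<in> space P" for s \<omega>
    using g_range shift_pow_space[OF sets_P that] by blast
  have hb: "0 \<le> h' \<omega> \<and> h' \<omega> \<le> 1" for \<omega> unfolding h'_def by auto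
  define G1 where "G1 = (\<lambda>\<omega>. \<Prod>i<K. g ((shift ^^ (i * L)) \<omega>))"
  define G2 where "G2 = (\<lambda>\<omega>. \<Prod>i<K. g ((shift ^^ (i * L + r)) \<omega>))"
  define H2 where "H2 = (\<lambda>\<omega>. \<Prod>i<K. h' ((shift ^^ (i * L + r)) \<omega>))"
  define D2 where "D2 = (\<lambda>\<omega>. \<Sum>i<K. \<bar>g ((shift ^^ (i * L + r)) \<omega>) - h' ((shift ^^ (i * L + r)) \<omega>)\<bar>)"
  have G1m: "G1 \<in> borel_measurable P" unfolding G1_def by (intro borel_measurable_prod gs)
  have G2m: "G2 \<in> borel_measurable P" unfolding G2_def by (intro borel_measurable_prod gs)
  have H2m: "H2 \<in> borel_measurable P" unfolding H2_def by (intro borel_measurable_prod hs)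
  have gpm: "gprod g n \<in> borel_measurable P" unfolding gprod_def[abs_def] by (intro borel_measurable_prod gs)
  have dm: "(\<lambda>\<omega>. \<bar>g \<omega> - h' \<omega>\<bar>) \<in> borel_measurable P" using g_meas h'P by measurable
  have dsm: "(\<lambda>\<omega>. \<bar>g ((shift ^^ s) \<omega>) - h' ((shift ^^ s) \<omega>)\<bar>) \<in> borel_measurable P" for s
    using measurable_compose[OF shift_pow_meas[OF sets_P] dm] by simp
  have dsb: "\<bar>g ((shift ^^ s) x) - h' ((shift ^^ s) x)\<bar> \<le> 1" if "x \<in> space P" for s x
    using gsb[OF that, of s] hb[of "(shift ^^ s) x"] unfolding abs_le_iff by linarith
  have dsi: "integrable P (\<lambda>\<omega>. \<bar>g ((shift ^^ s) \<omega>) - h' ((shift ^^ s) \<omega>)\<bar>)" for s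
    by (rule integrable_const_bound[where B=1, OF AE_I2 dsm]) (use dsb in auto)
  have G1i: "integrable P G1"
    by (rule integrable_const_bound[where B=1, OF AE_I2 G1m]) (use gsb in \<open>auto simp: G1_def intro!: prod_abs_le1\<close>)
  have G2i: "integrable P G2"
    by (rule integrable_const_bound[where B=1, OF AE_I2 G2m]) (use gsb in \<open>auto simp: G2_def intro!: prod_abs_le1\<close>)
  have H2i: "integrable P H2"
    by (rule integrable_const_bound[where B=1, OF AE_I2 H2m]) (use hb in \<open>auto simp: H2_def intro!: prod_abs_le1\<close>)
  have gpi: "integrable P (gprod g n)"
    by (rule integrable_const_bound[where B=1, OF AE_I2 gpm]) (use gsb in \<open>auto simp: gprod_def intro!: prod_abs_le1\<close>)
  have D2i: "integrable P D2" unfolding D2_def by (rule Bochner_Integration.integrable_sum) (rule dsi)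
  have step1: "gprod g n \<omega> \<le> G1 \<omega>" if \<omega>: "\<omega> \<in> space P" for \<omega>
  proof -
    have sub: "(\<lambda>i. i * L) ` {..<K} \<subseteq> {..<n}"
    proof
      fix j assume "j \<in> (\<lambda>i. i * L) ` {..<K}"
      then obtain i where i: "i < K" "j = i * L" by auto
      then have "i \<le> (n - 1) div L" by (simp add: K_def)
      then have "i * L \<le> (n - 1) div L * L" by simp
      also have "\<dots> \<le> n - 1" by simp
      finally have "j \<le> n - 1" using i by simp
      then show "j \<in> {..<n}" using n1 by simp
    qed
    have "gprod g n \<omega> = (\<Prod>j<n. g ((shift ^^ j) \<omega>))" by (simp add: gprod_def)
    also have "\<dots> \<le> (\<Prod>j\<in>(\<lambda>i. i * L) ` {..<K}. g ((shift ^^ j) \<omega>))"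
      by (rule prod_subset_le[OF _ sub]) (use gsb[OF \<omega>] in auto)
    also have "\<dots> = G1 \<omega>"
      using L1 by (subst prod.reindex) (auto simp: G1_def inj_on_def)
    finally show ?thesis .
  qed
  have step2: "(\<integral>\<omega>. G1 \<omega> \<partial>P) = (\<integral>\<omega>. G2 \<omega> \<partial>P)"
  proof -
    have "(\<integral>\<omega>. G1 ((shift ^^ r) \<omega>) \<partial>P) = (\<integral>\<omega>. G1 \<omega> \<partial>P)"
      by (rule integral_shift_pow[OF sets_P stationary G1m])
    moreover have "G1 ((shift ^^ r) \<omega>) = G2 \<omega>" for \<omega>
      by (simp add: G1_def G2_def funpow_add)
    ultimately show ?thesis by simp
  qed
  have step3: "G2 \<omega> \<le> H2 \<omega> + D2 \<omega>" if \<omega>: "\<omega> \<in> space P" for \<omega>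
    unfolding G2_def H2_def D2_def
    by (rule prod_tele) (use gsb[OF \<omega>] hb in blast)
  have "(\<integral>\<omega>. G2 \<omega> \<partial>P) \<le> (\<integral>\<omega>. H2 \<omega> + D2 \<omega> \<partial>P)"
    by (rule integral_mono[OF G2i _ step3]) (use H2i D2i in auto)
  also have "\<dots> = (\<integral>\<omega>. H2 \<omega> \<partial>P) + (\<integral>\<omega>. D2 \<omega> \<partial>P)"
    by (rule Bochner_Integration.integral_add[OF H2i D2i])
  also have "(\<integral>\<omega>. D2 \<omega> \<partial>P) = (\<Sum>i<K. (\<integral>\<omega>. \<bar>g ((shift ^^ (i * L + r)) \<omega>) - h' ((shift ^^ (i * L + r)) \<omega>)\<bar> \<partial>P))"
    unfolding D2_def by (rule Bochner_Integration.integral_sum) (rule dsi)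
  also have "\<dots> = (\<Sum>i<K. (\<integral>\<omega>. \<bar>g \<omega> - h' \<omega>\<bar> \<partial>P))"
  proof (rule sum.cong[OF refl])
    fix i
    show "(\<integral>\<omega>. \<bar>g ((shift ^^ (i * L + r)) \<omega>) - h' ((shift ^^ (i * L + r)) \<omega>)\<bar> \<partial>P) = (\<integral>\<omega>. \<bar>g \<omega> - h' \<omega>\<bar> \<partial>P)"
      using integral_shift_pow[OF sets_P stationary dm, of "i * L + r"] by simp
  qed
  also have "\<dots> = real K * (\<integral>\<omega>. \<bar>g \<omega> - h' \<omega>\<bar> \<partial>P)" by simp
  also have "\<dots> \<le> real K * beta1 P M0 g r" using clip4 by (intro mult_left_mono) auto
  also have "(\<integral>\<omega>. H2 \<omega> \<partial>P) \<le> ((1 + c) * \<mu>) ^ K"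
    unfolding H2_def K_def L_def
    by (rule prod_bound[OF prob sets_P stationary _ hb clip3 psim c0]) (use clip1 in \<open>simp add: L_def\<close>)
  finally have "(\<integral>\<omega>. G2 \<omega> \<partial>P) \<le> ((1 + c) * \<mu>) ^ K + real K * beta1 P M0 g r" by simp
  moreover have "(\<integral>\<omega>. gprod g n \<omega> \<partial>P) \<le> (\<integral>\<omega>. G1 \<omega> \<partial>P)"
    by (rule integral_mono[OF gpi G1i step1])
  ultimately show ?thesis using step2 by (simp add: K_def L_def \<mu>_def)
qed



lemma exp_ge_pow:
  fixes z :: real and N :: nat
  assumes "0 \<le> z" "N \<ge> 1"
  shows "(z / N) ^ N \<le> exp z"
proof -
  have "z / N \<le> exp (z / N)" using exp_ge_add_one_self[of "z / N"] by linarith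
  then have "(z / N) ^ N \<le> exp (z / N) ^ N" using assms by (intro power_mono) auto
  also have "\<dots> = exp (real N * (z / N))" by (rule exp_of_nat_mult[symmetric])
  also have "\<dots> = exp z" using assms by simp
  finally show ?thesis .
qed

lemma exp_decay:
  fixes q \<delta> M b :: real
  assumes q0: "0 \<le> q" and q1: "q < 1" and d0: "\<delta> > 0" and M0: "M > 0"
  shows "\<exists>D>0. \<forall>x::real. x \<ge> 1 \<longrightarrow> (\<forall>K::nat. x powr \<delta> / M \<le> real K \<longrightarrow> q ^ K \<le> D * x powr b)"
proof (cases "b \<ge> 0")
  case True
  show ?thesis
  proof (intro exI[of _ 1] conjI allI impI)
    fix x :: real and K :: nat assume x: "x \<ge> 1"
    have "q ^ K \<le> 1" using q0 q1 by (simp add: power_le_one)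
    also have "\<dots> \<le> x powr b" using x True by (simp add: ge_one_powr_ge_zero)
    finally show "q ^ K \<le> 1 * x powr b" by simp
  qed simp
next
  case False
  show ?thesis
  proof (cases "q = 0")
    case True
    show ?thesis
    proof (intro exI[of _ 1] conjI allI impI)
      fix x :: real and K :: nat assume x: "x \<ge> 1" and K: "x powr \<delta> / M \<le> real K"
      have "0 < x powr \<delta> / M" using x M0 by simp
      then have "K \<noteq> 0" using K by auto
      then show "q ^ K \<le> 1 * x powr b" using True by (simp add: power_0_left)
    qed simp
  next
    case qn0: False
    then have qpos: "q > 0" using q0 by simp
    have lnq: "ln q < 0" using qpos q1 by simp
    define a where "a = - ln q / M"
    have a0: "a > 0" using lnq M0 by (simp add: a_def divide_neg_pos)
    define N where "N = nat \<lceil>- b / \<delta>\<rceil> + 1"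
    have N1: "N \<ge> 1" by (simp add: N_def)
    have NB: "- b / \<delta> \<le> real N" unfolding N_def by linarith
    then have NB2: "- (\<delta> * real N) \<le> b" using d0 by (simp add: field_simps)
    define D where "D = (real N / a) ^ N"
    have D0: "D > 0" using a0 N1 by (simp add: D_def)
    show ?thesis
    proof (intro exI[of _ D] conjI allI impI D0)
      fix x :: real and K :: nat assume x: "x \<ge> 1" and K: "x powr \<delta> / M \<le> real K"
      define z where "z = a * x powr \<delta>"
      have z0: "z > 0" using a0 x by (simp add: z_def)
      have "q ^ K = exp (real K * ln q)" using qpos by (simp add: exp_of_nat_mult)
      also have "real K * ln q \<le> (x powr \<delta> / M) * ln q"
        using K lnq by (intro mult_right_mono_neg) auto
      also have "(x powr \<delta> / M) * ln q = - z" by (simp add: z_def a_def)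
      finally have "q ^ K \<le> exp (- z)" by simp
      also have "exp (- z) = 1 / exp z" by (simp add: exp_minus field_simps)
      also have "\<dots> \<le> 1 / (z / N) ^ N"
        using exp_ge_pow[of z N] z0 N1 by (intro divide_left_mono) auto
      also have "1 / (z / N) ^ N = D * (x powr \<delta>) powr (- real N)"
        using z0 x a0 N1 by (simp add: D_def z_def powr_minus power_divide powr_realpow field_simps power_mult_distrib)
      also have "(x powr \<delta>) powr (- real N) = x powr (- (\<delta> * real N))"
        by (simp add: powr_powr)
      also have "D * \<dots> \<le> D * x powr b"
        using D0 x NB2 by (intro mult_left_mono powr_mono) auto
      finally show "q ^ K \<le> D * x powr b" .
    qed
  qed
qed



theorem lemma3p5:
  fixes P :: "(int \<Rightarrow> 'a) measure" and M0 :: "'a measure"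
    and g :: "(int \<Rightarrow> 'a) \<Rightarrow> real" and C A :: real
  assumes prob: "prob_space P"
    and sets_P: "sets P = sets (Pi\<^sub>M UNIV (\<lambda>_::int. M0))"
    and stationary: "distr P P shift = P"
    and g_meas: "g \<in> borel_measurable P"
    and g_range: "\<And>\<omega>. \<omega> \<in> space P \<Longrightarrow> 0 \<le> g \<omega> \<and> g \<omega> \<le> 1"
    and Eg: "(\<integral>\<omega>. g \<omega> \<partial>P) < 1"
    and psi: "limsup (psiU P M0) < 1 / ereal (\<integral>\<omega>. g \<omega> \<partial>P) - 1"
    and C_pos: "C > 0" and A_gt: "A > 1"
    and beta: "\<And>r::nat. r \<ge> 1 \<Longrightarrow> beta1 P M0 g r \<le> C * real r powr (- A)"
  shows "\<forall>\<epsilon>::real. 0 < \<epsilon> \<and> \<epsilon> < 1 \<longrightarrow>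
           (\<exists>C\<epsilon>>0. \<forall>n::nat. n \<ge> 1 \<longrightarrow>
              (\<integral>\<omega>. gprod g n \<omega> \<partial>P) \<le> C\<epsilon> * real n powr (1 - \<epsilon> * A))"
proof (intro allI impI)
  fix \<epsilon> :: real assume \<epsilon>: "0 < \<epsilon> \<and> \<epsilon> < 1"
  interpret prob_space P by (rule prob)
  define \<mu> where "\<mu> = (\<integral>\<omega>. g \<omega> \<partial>P)"
  have mu0: "0 \<le> \<mu>" unfolding \<mu>_def using g_range by (intro Bochner_Integration.integral_nonneg) auto
  obtain c m0 where c0: "c > 0" and cmu: "(1 + c) * \<mu> < 1" and cm: "\<forall>m\<ge>m0. psiU P M0 m < ereal c"
    using psi_choice[OF mu0 Eg[folded \<mu>_def] psi[folded \<mu>_def]] by blast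
  define m where "m = m0 + 1"
  have psim: "psiU P M0 m < ereal c" using cm by (simp add: m_def)
  have m1: "1 \<le> m" by (simp add: m_def)
  define q where "q = (1 + c) * \<mu>"
  have q0: "0 \<le> q" using c0 mu0 by (simp add: q_def)
  have q1: "q < 1" using cmu by (simp add: q_def)
  obtain D where D0: "D > 0" and Dprop: "\<And>x K. x \<ge> 1 \<Longrightarrow> x powr (1 - \<epsilon>) / (real m + 4) \<le> real K \<Longrightarrow> q ^ K \<le> D * x powr (1 - \<epsilon> * A)"
    using exp_decay[OF q0 q1, of "1 - \<epsilon>" "real m + 4" "1 - \<epsilon> * A"] \<epsilon> by auto
  show "\<exists>C\<epsilon>>0. \<forall>n::nat. n \<ge> 1 \<longrightarrow> (\<integral>\<omega>. gprod g n \<omega> \<partial>P) \<le> C\<epsilon> * real n powr (1 - \<epsilon> * A)"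
  proof (intro exI[of _ "D + C"] conjI allI impI)
    show "0 < D + C" using D0 C_pos by simp
    fix n :: nat assume n1: "1 \<le> n"
    define x where "x = real n"
    have x1: "x \<ge> 1" using n1 by (simp add: x_def)
    define r where "r = nat \<lceil>x powr \<epsilon>\<rceil>"
    have xe1: "x powr \<epsilon> \<ge> 1" using x1 \<epsilon> by (simp add: ge_one_powr_ge_zero)
    have r_ge: "real r \<ge> x powr \<epsilon>" unfolding r_def by linarith
    have r_le: "real r \<le> x powr \<epsilon> + 1" unfolding r_def using xe1 by linarith
    have r1: "r \<ge> 1" using r_ge xe1 by linarith
    define L where "L = 2 * r + m"
    define K where "K = Suc ((n - 1) div L)"
    have bound: "(\<integral>\<omega>. gprod g n \<omega> \<partial>P) \<le> q ^ K + real K * beta1 P M0 g r"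
      using main_bound[OF prob sets_P stationary g_meas g_range psim _ m1 n1, of r] c0
      by (simp add: q_def \<mu>_def K_def L_def)
    have "(n - 1) div L \<le> n - 1" by (rule div_le_dividend)
    then have Kn: "K \<le> n" using n1 unfolding K_def by linarith
    have beta0: "0 \<le> C * real r powr (- A)" using C_pos by simp
    have rpow: "real r powr (- A) \<le> x powr (- (\<epsilon> * A))"
    proof -
      have "real r powr (- A) \<le> (x powr \<epsilon>) powr (- A)"
        using A_gt xe1 r_ge by (intro powr_mono2') auto
      also have "\<dots> = x powr (- (\<epsilon> * A))" using x1 by (simp add: powr_powr)
      finally show ?thesis .
    qed
    have "real K * beta1 P M0 g r \<le> real K * (C * real r powr (- A))"
      using beta[OF r1] by (intro mult_left_mono) auto
    also have "\<dots> \<le> x * (C * real r powr (- A))"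
      using Kn beta0 by (intro mult_right_mono) (auto simp: x_def)
    also have "\<dots> \<le> x * (C * x powr (- (\<epsilon> * A)))"
      using rpow C_pos x1 by (intro mult_left_mono) auto
    also have "\<dots> = C * x powr (1 - \<epsilon> * A)"
      using x1 by (simp add: powr_diff powr_minus field_simps)
    finally have t2: "real K * beta1 P M0 g r \<le> C * x powr (1 - \<epsilon> * A)" .
    have KL: "real n \<le> real K * real L"
    proof -
      have L0: "L > 0" using m1 by (simp add: L_def)
      have e1: "(n - 1) div L * L + (n - 1) mod L = n - 1" by (rule div_mult_mod_eq)
      have e2: "(n - 1) mod L < L" using L0 by simp
      have e3: "K * L = (n - 1) div L * L + L" by (simp add: K_def)
      have "n \<le> K * L" using e1 e2 e3 n1 by linarith
      then show ?thesis by (metis of_nat_le_iff of_nat_mult)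
    qed
    have Lb: "real L \<le> (real m + 4) * x powr \<epsilon>"
    proof -
      have "real L = 2 * real r + real m" by (simp add: L_def)
      also have "\<dots> \<le> 2 * x powr \<epsilon> + 2 + real m" using r_le by simp
      also have "\<dots> \<le> (real m + 4) * x powr \<epsilon>"
      proof -
        have "(real m + 2) * 1 \<le> (real m + 2) * x powr \<epsilon>" using xe1 by (intro mult_left_mono) auto
        then show ?thesis by (simp add: algebra_simps)
      qed
      finally show ?thesis .
    qed
    have Lpos: "real L > 0" using m1 by (simp add: L_def)
    have "x powr (1 - \<epsilon>) / (real m + 4) = x / ((real m + 4) * x powr \<epsilon>)"
      using x1 by (simp add: powr_diff)
    also have "\<dots> \<le> x / real L"
      using Lb Lpos x1 by (intro divide_left_mono) auto
    also have "\<dots> \<le> real K" using KL Lpos by (simp add: x_def divide_le_eq)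
    finally have t1: "q ^ K \<le> D * x powr (1 - \<epsilon> * A)" by (rule Dprop[OF x1])
    have "(\<integral>\<omega>. gprod g n \<omega> \<partial>P) \<le> D * x powr (1 - \<epsilon> * A) + C * x powr (1 - \<epsilon> * A)"
      using bound t1 t2 by linarith
    then show "(\<integral>\<omega>. gprod g n \<omega> \<partial>P) \<le> (D + C) * real n powr (1 - \<epsilon> * A)"
      by (simp add: x_def distrib_right)
  qed
qed

end
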